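(* Let $P$ be a rooted tree poset with $n$ elements and let $L$ be a labeling of $P$ such that $L^{-1}(n)$ is the maximal element (root) of $P$. Let $b$ be the highest branch vertex of $P$, let $c_1<_P\cdots<_P c_k$ be the $L$-golden elements $x$ with $x\ge_P b$ (these form a chain, and $c_k$ is the root), and let $\mathcal M$ be the set of maximal $L$-golden rooted subtrees of $P$ whose roots are less than $b$. Then \[|\partial^{-1}(L)|=2^{k-1}+\sum_{T\in\mathcal M}\sum_{x\in T}2^{\omega_T(x)+k-2},\] where $\omega_T(x)$ is the number of elements on the path $x=p_1\lessdot p_2\lessdot\cdots\lessdot p_{\omega_T(x)}$ from $x$ to the root of $T$ in the Hasse diagram of the induced subposet $T$.
   Context: A labeling of an $n$-element poset $P$ is a bijection $L:P\to[n]$; promotion $\partial$ is defined as follows: for non-maximal $x$, the $L$-successor of $x$ is the element greater than $x$ with minimal label; the promotion chain is $v_1=L^{-1}(1)$, $v_{i+1}$ the $L$-successor of $v_i$, ending at the first maximal element $v_m$; $\partial(L)(x)=L(x)-1$ for $x$ off the chain, $\partial(L)(v_i)=L(v_{i+1})-1$ for $i<m$, $\partial(L)(v_m)=n$. A rooted tree poset is a connected poset in which every element is covered by at most one element (so it has a unique maximal element, the root). An element $x$ is $L$-golden if $L(y)>L(x)$ for all $y>_P x$; a set is $L$-golden if all its elements are. A subset of $P$ is a subtree if its induced subposet is a rooted tree poset. The highest branch vertex $b$ is the largest element of $P$ that covers more than one element (if no element covers more than one element, i.e. $P$ is a chain, take $b$ to be the minimum of $P$); the set $\{x: x\ge_P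 b\}$ is a chain. Here $\mathcal M$ consists of the maximal subsets $T$ of $\{x\in P: x \text{ is } L\text{-golden},\ x<_P b\}$ whose induced subposet is a rooted tree (equivalently, the connected components of the induced subposet on that set). *)

theory Defs
  imports Main
begin

definition poset :: "'a set \<Rightarrow> ('a \<Rightarrow> 'a \<Rightarrow> bool) \<Rightarrow> bool" where
  "poset P le \<longleftrightarrow> (\<forall>x\<in>P. le x x)
     \<and> (\<forall>x\<in>P. \<forall>y\<in>P. le x y \<and> le y x \<longrightarrow> x = y)
     \<and> (\<forall>x\<in>P. \<forall>y\<in>P. \<forall>z\<in>P. le x y \<and> le y z \<longrightarrow> le x z)"

definition lt :: "('a \<Rightarrow> 'a \<Rightarrow> bool) \<Rightarrow> 'a \<Rightarrow> 'a \<Rightarrow> bool" where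
  "lt le x y \<longleftrightarrow> le x y \<and> x \<noteq> y"

definition maximal :: "'a set \<Rightarrow> ('a \<Rightarrow> 'a \<Rightarrow> bool) \<Rightarrow> 'a \<Rightarrow> bool" where
  "maximal P le x \<longleftrightarrow> x \<in> P \<and> (\<forall>y\<in>P. le x y \<longrightarrow> y = x)"

definition covers :: "'a set \<Rightarrow> ('a \<Rightarrow> 'a \<Rightarrow> bool) \<Rightarrow> 'a \<Rightarrow> 'a \<Rightarrow> bool" where
  "covers P le x y \<longleftrightarrow> x \<in> P \<and> y \<in> P \<and> lt le x y \<and> \<not> (\<exists>z\<in>P. lt le x z \<and> lt le z y)"

definition poset_connected :: "'a set \<Rightarrow> ('a \<Rightarrow> 'a \<Rightarrow> bool) \<Rightarrow> bool" where
  "poset_connected P le \<longleftrightarrow>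
     (\<forall>x\<in>P. \<forall>y\<in>P. (x, y) \<in> {(a, b). a \<in> P \<and> b \<in> P \<and> (le a b \<or> le b a)}\<^sup>*)"

definition rooted_tree :: "'a set \<Rightarrow> ('a \<Rightarrow> 'a \<Rightarrow> bool) \<Rightarrow> bool" where
  "rooted_tree P le \<longleftrightarrow> finite P \<and> P \<noteq> {} \<and> poset P le \<and> poset_connected P le
     \<and> (\<forall>x\<in>P. card {y\<in>P. covers P le x y} \<le> 1)"

text \<open>Labelings of P: bijections P \<rightarrow> {1..n}, extended by 0 outside P (so that the set of
  labelings is finite).\<close>
definition labelings :: "'a set \<Rightarrow> ('a \<Rightarrow> nat) set" where
  "labelings P = {L. bij_betw L P {1..card P} \<and> (\<forall>x. x \<notin> P \<longrightarrow> L x = 0)}"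

definition lsucc :: "'a set \<Rightarrow> ('a \<Rightarrow> 'a \<Rightarrow> bool) \<Rightarrow> ('a \<Rightarrow> nat) \<Rightarrow> 'a \<Rightarrow> 'a" where
  "lsucc P le L x = (SOME y. y \<in> P \<and> lt le x y \<and> (\<forall>z\<in>P. lt le x z \<longrightarrow> L y \<le> L z))"

inductive_set pchain :: "'a set \<Rightarrow> ('a \<Rightarrow> 'a \<Rightarrow> bool) \<Rightarrow> ('a \<Rightarrow> nat) \<Rightarrow> 'a set"
  for P le L where
  start: "x \<in> P \<Longrightarrow> L x = 1 \<Longrightarrow> x \<in> pchain P le L"
| step: "v \<in> pchain P le L \<Longrightarrow> \<not> maximal P le v \<Longrightarrow> lsucc P le L v \<in> pchain P le L"

definition promote :: "'a set \<Rightarrow> ('a \<Rightarrow> 'a \<Rightarrow> bool) \<Rightarrow> ('a \<Rightarrow> nat) \<Rightarrow> 'a \<Rightarrow> nat" where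
  "promote P le L x =
     (if x \<in> pchain P le L then
        (if maximal P le x then card P else L (lsucc P le L x) - 1)
      else L x - 1)"

definition golden :: "'a set \<Rightarrow> ('a \<Rightarrow> 'a \<Rightarrow> bool) \<Rightarrow> ('a \<Rightarrow> nat) \<Rightarrow> 'a \<Rightarrow> bool" where
  "golden P le L x \<longleftrightarrow> x \<in> P \<and> (\<forall>y\<in>P. lt le x y \<longrightarrow> L x < L y)"

definition is_branch :: "'a set \<Rightarrow> ('a \<Rightarrow> 'a \<Rightarrow> bool) \<Rightarrow> 'a \<Rightarrow> bool" where
  "is_branch P le x \<longleftrightarrow> x \<in> P \<and> card {y\<in>P. covers P le y x} \<ge> 2"

definition hbv :: "'a set \<Rightarrow> ('a \<Rightarrow> 'a \<Rightarrow> bool) \<Rightarrow> 'a" where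
  "hbv P le =
     (if \<exists>x. is_branch P le x
      then (THE x. is_branch P le x \<and> (\<forall>y. is_branch P le y \<longrightarrow> le y x))
      else (THE x. x \<in> P \<and> (\<forall>y\<in>P. le x y)))"

definition goldenM :: "'a set \<Rightarrow> ('a \<Rightarrow> 'a \<Rightarrow> bool) \<Rightarrow> ('a \<Rightarrow> nat) \<Rightarrow> 'a set set" where
  "goldenM P le L =
     (let G = {x\<in>P. golden P le L x \<and> lt le x (hbv P le)} in
      {T. T \<subseteq> G \<and> rooted_tree T le \<and>
          (\<forall>T'. T \<subseteq> T' \<and> T' \<subseteq> G \<and> rooted_tree T' le \<longrightarrow> T' = T)})"

text \<open>\<omega>_T(x): number of elements on the Hasse-diagram path from x to the root of the tree T,
  i.e. the number of elements of T weakly above x.\<close>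
definition omega :: "'a set \<Rightarrow> ('a \<Rightarrow> 'a \<Rightarrow> bool) \<Rightarrow> 'a \<Rightarrow> nat" where
  "omega T le x = card {y\<in>T. le x y}"

end

theory Submission
  imports Defs
begin


locale rtree =
  fixes P :: "'a set" and le :: "'a \<Rightarrow> 'a \<Rightarrow> bool"
  assumes rt: "rooted_tree P le"
begin

lemma rt_parts: "finite P" "P \<noteq> {}" "poset P le" "poset_connected P le"
   "\<forall>x\<in>P. card {y\<in>P. covers P le x y} \<le> 1"
  using rt unfolding rooted_tree_def by blast+
lemma fin: "finite P" by (rule rt_parts)
lemma ne: "P \<noteq> {}" by (rule rt_parts)
lemma refl: "x \<in> P \<Longrightarrow> le x x" using rt_parts(3) unfolding poset_def by blast
lemma antisym: "x \<in> P \<Longrightarrow> y \<in> P \<Longrightarrow> le x y \<Longrightarrow> le y x \<Longrightarrow> x = y"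
  using rt_parts(3) unfolding poset_def by blast
lemma trans: "x \<in> P \<Longrightarrow> y \<in> P \<Longrightarrow> z \<in> P \<Longrightarrow> le x y \<Longrightarrow> le y z \<Longrightarrow> le x z"
  using rt_parts(3) unfolding poset_def by blast
lemma conn: "x \<in> P \<Longrightarrow> y \<in> P \<Longrightarrow> (x, y) \<in> {(a, b). a \<in> P \<and> b \<in> P \<and> (le a b \<or> le b a)}\<^sup>*"
  using rt_parts(4) unfolding poset_connected_def by blast

lemma covers_uniq:
  assumes "covers P le x y1" "covers P le x y2" shows "y1 = y2"
proof -
  have x: "x \<in> P" using assms(1) by (simp add: covers_def)
  have "card {y\<in>P. covers P le x y} \<le> 1" using rt_parts(5) x by blast
  moreover have "finite {y\<in>P. covers P le x y}" using fin by simp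
  ultimately show ?thesis using assms card_le_Suc0_iff_eq[of "{y\<in>P. covers P le x y}"]
    by (auto simp: covers_def)
qed

lemma lt_trans: "x \<in> P \<Longrightarrow> y \<in> P \<Longrightarrow> z \<in> P \<Longrightarrow> lt le x y \<Longrightarrow> lt le y z \<Longrightarrow> lt le x z"
  unfolding lt_def using trans antisym by metis
lemma lt_le_trans: "x \<in> P \<Longrightarrow> y \<in> P \<Longrightarrow> z \<in> P \<Longrightarrow> lt le x y \<Longrightarrow> le y z \<Longrightarrow> lt le x z"
  unfolding lt_def using trans antisym by metis
lemma le_lt_trans: "x \<in> P \<Longrightarrow> y \<in> P \<Longrightarrow> z \<in> P \<Longrightarrow> le x y \<Longrightarrow> lt le y z \<Longrightarrow> lt le x z"
  unfolding lt_def using trans antisym by metis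
lemma lt_irrefl: "\<not> lt le x x" by (simp add: lt_def)
lemma lt_asym: "x \<in> P \<Longrightarrow> y \<in> P \<Longrightarrow> lt le x y \<Longrightarrow> lt le y x \<Longrightarrow> False"
  unfolding lt_def using antisym by blast

lemma ex_max:
  assumes "S \<subseteq> P" "S \<noteq> {}" shows "\<exists>m\<in>S. \<forall>y\<in>S. \<not> lt le m y"
proof -
  obtain k where k: "k \<in> S" using assms by blast
  obtain m where m: "m \<in> S" and mmin: "\<And>y. y \<in> S \<Longrightarrow> card {z\<in>P. lt le m z} \<le> card {z\<in>P. lt le y z}"
    using ex_has_least_nat[of "\<lambda>x. x \<in> S" k "\<lambda>x. card {z\<in>P. lt le x z}"] k by blast
  show ?thesis
  proof (intro bexI[OF _ m] ballI notI)
    fix y assume y: "y \<in> S" and my: "lt le m y"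
    have "{z\<in>P. lt le y z} \<subset> {z\<in>P. lt le m z}"
    proof
      show "{z\<in>P. lt le y z} \<subseteq> {z\<in>P. lt le m z}"
        using lt_trans[of m y] my y m assms(1) by blast
      show "{z\<in>P. lt le y z} \<noteq> {z\<in>P. lt le m z}" using my y assms(1) lt_irrefl by blast
    qed
    hence "card {z\<in>P. lt le y z} < card {z\<in>P. lt le m z}"
      using fin by (simp add: psubset_card_mono)
    thus False using mmin[OF y] by simp
  qed
qed

lemma ex_min:
  assumes "S \<subseteq> P" "S \<noteq> {}" shows "\<exists>m\<in>S. \<forall>y\<in>S. \<not> lt le y m"
proof -
  obtain k where k: "k \<in> S" using assms by blast
  obtain m where m: "m \<in> S" and mmin: "\<And>y. y \<in> S \<Longrightarrow> card {z\<in>P. lt le z m} \<le> card {z\<in>P. lt le z y}"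
    using ex_has_least_nat[of "\<lambda>x. x \<in> S" k "\<lambda>x. card {z\<in>P. lt le z x}"] k by blast
  show ?thesis
  proof (intro bexI[OF _ m] ballI notI)
    fix y assume y: "y \<in> S" and my: "lt le y m"
    have "{z\<in>P. lt le z y} \<subset> {z\<in>P. lt le z m}"
    proof
      show "{z\<in>P. lt le z y} \<subseteq> {z\<in>P. lt le z m}"
        using lt_trans[of _ y m] my y m assms(1) by blast
      show "{z\<in>P. lt le z y} \<noteq> {z\<in>P. lt le z m}" using my y assms(1) lt_irrefl by blast
    qed
    hence "card {z\<in>P. lt le z y} < card {z\<in>P. lt le z m}"
      using fin by (simp add: psubset_card_mono)
    thus False using mmin[OF y] by simp
  qed
qed

lemma cover_above:
  assumes "a \<in> P" "z \<in> P" "lt le a z" shows "\<exists>c. covers P le a c \<and> le c z"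
proof -
  have "{w\<in>P. lt le a w \<and> le w z} \<noteq> {}" using assms refl by blast
  then obtain c where c: "c \<in> P" "lt le a c" "le c z"
    and cm: "\<forall>y\<in>{w\<in>P. lt le a w \<and> le w z}. \<not> lt le y c"
    using ex_min[of "{w\<in>P. lt le a w \<and> le w z}"] by blast
  have "covers P le a c"
    unfolding covers_def
  proof (intro conjI)
    show "\<not> (\<exists>w\<in>P. lt le a w \<and> lt le w c)"
    proof
      assume "\<exists>w\<in>P. lt le a w \<and> lt le w c"
      then obtain w where w: "w \<in> P" "lt le a w" "lt le w c" by blast
      have "le w z" using trans[of w c z] w c assms by (simp add: lt_def)
      thus False using cm w by blast
    qed
  qed (use c assms in auto)
  thus ?thesis using c by blast
qed

lemma cover_below:
  assumes "a \<in> P" "z \<in> P" "lt le a z" shows "\<exists>c. le a c \<and> covers P le c z"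
proof -
  have "{w\<in>P. le a w \<and> lt le w z} \<noteq> {}" using assms refl by blast
  then obtain c where c: "c \<in> P" "le a c" "lt le c z"
    and cm: "\<forall>y\<in>{w\<in>P. le a w \<and> lt le w z}. \<not> lt le c y"
    using ex_max[of "{w\<in>P. le a w \<and> lt le w z}"] by blast
  have "covers P le c z"
    unfolding covers_def
  proof (intro conjI)
    show "\<not> (\<exists>w\<in>P. lt le c w \<and> lt le w z)"
    proof
      assume "\<exists>w\<in>P. lt le c w \<and> lt le w z"
      then obtain w where w: "w \<in> P" "lt le c w" "lt le w z" by blast
      have "le a w" using trans[of a c w] w c assms by (simp add: lt_def)
      thus False using cm w by blast
    qed
  qed (use c assms in auto)
  thus ?thesis using c by blast
qed

lemma tp_aux:
  "\<forall>x y z. card {w\<in>P. le x w} = n \<longrightarrow> x \<in> P \<longrightarrow> y \<in> P \<longrightarrow> z \<in> P \<longrightarrow> le x y \<longrightarrow> le x z \<longrightarrow> le y z \<or> le z y"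
proof (induction n rule: less_induct)
  case (less n)
  show ?case
  proof (intro allI impI)
    fix x y z assume n: "card {w\<in>P. le x w} = n" and P: "x \<in> P" "y \<in> P" "z \<in> P"
      and xy: "le x y" and xz: "le x z"
    show "le y z \<or> le z y"
    proof (cases "x = y \<or> x = z")
      case True thus ?thesis using xy xz by blast
    next
      case False
      hence "lt le x y" "lt le x z" using xy xz by (auto simp: lt_def)
      then obtain c1 c2 where c1: "covers P le x c1" "le c1 y" and c2: "covers P le x c2" "le c2 z"
        using cover_above P by metis
      have "c1 = c2" using covers_uniq c1 c2 by blast
      have c1P: "c1 \<in> P" and xc1: "lt le x c1" using c1 by (auto simp: covers_def)
      have "{w\<in>P. le c1 w} \<subset> {w\<in>P. le x w}"
      proof
        show "{w\<in>P. le c1 w} \<subseteq> {w\<in>P. le x w}" using trans[of x c1] P c1P xc1 by (auto simp: lt_def)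
        show "{w\<in>P. le c1 w} \<noteq> {w\<in>P. le x w}"
        proof
          assume "{w\<in>P. le c1 w} = {w\<in>P. le x w}"
          hence "le c1 x" using P refl by blast
          thus False using antisym[of x c1] xc1 P c1P by (auto simp: lt_def)
        qed
      qed
      hence "card {w\<in>P. le c1 w} < n" using n fin psubset_card_mono[of "{w\<in>P. le x w}"] by auto
      thus ?thesis using less.IH c1P P c1 c2 \<open>c1 = c2\<close> by blast
    qed
  qed
qed

lemma tp: "x \<in> P \<Longrightarrow> y \<in> P \<Longrightarrow> z \<in> P \<Longrightarrow> le x y \<Longrightarrow> le x z \<Longrightarrow> le y z \<or> le z y"
  using tp_aux by blast

lemma ex_root: "\<exists>r\<in>P. \<forall>x\<in>P. le x r"
proof -
  obtain r where r: "r \<in> P" "\<forall>y\<in>P. \<not> lt le r y" using ex_max[of P] ne by blast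
  have "\<forall>x\<in>P. le x r"
  proof
    fix x assume x: "x \<in> P"
    have "(r, x) \<in> {(a, b). a \<in> P \<and> b \<in> P \<and> (le a b \<or> le b a)}\<^sup>*" using conn r x by blast
    thus "le x r"
    proof (induction rule: rtrancl_induct)
      case base thus ?case using refl r by blast
    next
      case (step y z)
      hence yz: "y \<in> P" "z \<in> P" "le y z \<or> le z y" by auto
      show ?case
      proof (cases "le z y")
        case True thus ?thesis using trans step yz r by blast
      next
        case False
        hence "le y z" using yz by blast
        hence "le z r \<or> le r z" using tp[of y z r] step yz r by blast
        thus ?thesis using r(2) yz by (auto simp: lt_def)
      qed
    qed
  qed
  thus ?thesis using r by blast
qed

end


context rtree begin

lemma root_ex: obtains r where "r \<in> P" "\<And>x. x \<in> P \<Longrightarrow> le x r"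
  using ex_root by blast

lemma mcub: assumes "x \<in> P" "y \<in> P"
  shows "\<exists>z\<in>P. le x z \<and> le y z \<and> (\<forall>w\<in>P. le x w \<and> le y w \<longrightarrow> \<not> lt le w z)"
proof -
  obtain r where r: "r \<in> P" "\<And>x. x \<in> P \<Longrightarrow> le x r" using root_ex by blast
  have "{z\<in>P. le x z \<and> le y z} \<noteq> {}" using r assms by blast
  then obtain z where "z \<in> {z\<in>P. le x z \<and> le y z}" "\<forall>w\<in>{z\<in>P. le x z \<and> le y z}. \<not> lt le w z"
    using ex_min[of "{z\<in>P. le x z \<and> le y z}"] by blast
  thus ?thesis by blast
qed

lemma mcub_branch:
  assumes P: "x \<in> P" "y \<in> P" "z \<in> P" and le: "le x z" "le y z" and ne: "z \<noteq> x" "z \<noteq> y"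
    and mn: "\<forall>w\<in>P. le x w \<and> le y w \<longrightarrow> \<not> lt le w z"
  shows "is_branch P le z"
proof -
  have "lt le x z" "lt le y z" using le ne by (auto simp: lt_def)
  then obtain c1 c2 where c1: "le x c1" "covers P le c1 z" and c2: "le y c2" "covers P le c2 z"
    using cover_below P by metis
  have c1P: "c1 \<in> P" "lt le c1 z" using c1 by (auto simp: covers_def)
  have "c1 \<noteq> c2"
  proof
    assume "c1 = c2"
    hence "le y c1" using c2 by simp
    thus False using mn c1 c1P by blast
  qed
  have "{c1, c2} \<subseteq> {w\<in>P. covers P le w z}" using c1 c2 by (auto simp: covers_def)
  hence "card {c1, c2} \<le> card {w\<in>P. covers P le w z}" using fin by (intro card_mono) auto
  hence "2 \<le> card {w\<in>P. covers P le w z}" using \<open>c1 \<noteq> c2\<close> by simp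
  thus ?thesis using P by (simp add: is_branch_def)
qed

lemma branchP: "is_branch P le x \<Longrightarrow> x \<in> P" by (simp add: is_branch_def)

lemma hbv_props: "hbv P le \<in> P \<and> (\<forall>x\<in>P. le (hbv P le) x \<or> lt le x (hbv P le))"
proof (cases "\<exists>x. is_branch P le x")
  case True
  have "{x. is_branch P le x} \<subseteq> P" "{x. is_branch P le x} \<noteq> {}" using True branchP by auto
  then obtain m where m: "is_branch P le m" and mmax: "\<forall>y. is_branch P le y \<longrightarrow> \<not> lt le m y"
    using ex_max[of "{x. is_branch P le x}"] by blast
  have mP: "m \<in> P" using m branchP by blast
  have gr: "le y m" if y: "is_branch P le y" for y
  proof -
    have yP: "y \<in> P" using y branchP by blast
    obtain z where z: "z \<in> P" "le y z" "le m z" "\<forall>w\<in>P. le y w \<and> le m w \<longrightarrow> \<not> lt le w z"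
      using mcub[OF yP mP] by blast
    show ?thesis
    proof (cases "z = m")
      case True thus ?thesis using z by simp
    next
      case zm: False
      show ?thesis
      proof (cases "z = y")
        case True
        hence "le m y" using z by simp
        thus ?thesis using mmax y zm True refl[OF mP] by (auto simp: lt_def)
      next
        case False
        hence "is_branch P le z" using mcub_branch[OF yP mP z(1) z(2) z(3) False zm z(4)] by blast
        thus ?thesis using mmax zm z by (auto simp: lt_def)
      qed
    qed
  qed
  have hb: "hbv P le = m"
    unfolding hbv_def if_P[OF True]
    apply (rule the_equality)
    using m gr apply blast
    using gr m antisym mP branchP by blast
  have "le m x \<or> lt le x m" if x: "x \<in> P" for x
  proof -
    obtain z where z: "z \<in> P" "le x z" "le m z" "\<forall>w\<in>P. le x w \<and> le m w \<longrightarrow> \<not> lt le w z"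
      using mcub[OF x mP] by blast
    show ?thesis
    proof (cases "z = m")
      case True thus ?thesis using z refl[OF mP] by (auto simp: lt_def)
    next
      case zm: False
      show ?thesis
      proof (cases "z = x")
        case True thus ?thesis using z by simp
      next
        case False
        hence "is_branch P le z" using mcub_branch[OF x mP z(1) z(2) z(3) False zm z(4)] by blast
        hence "le z m" using gr by blast
        thus ?thesis using antisym z mP zm by blast
      qed
    qed
  qed
  thus ?thesis using hb mP by simp
next
  case False
  have comp: "le x y \<or> le y x" if xy: "x \<in> P" "y \<in> P" for x y
  proof -
    obtain z where z: "z \<in> P" "le x z" "le y z" "\<forall>w\<in>P. le x w \<and> le y w \<longrightarrow> \<not> lt le w z"
      using mcub[OF xy] by blast
    show ?thesis
    proof (cases "z = x \<or> z = y")
      case True thus ?thesis using z by blast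
    next
      case F2: False
      thus ?thesis using mcub_branch[OF xy z(1) z(2) z(3) _ _ z(4)] \<open>\<not> (\<exists>x. is_branch P le x)\<close> by blast
    qed
  qed
  obtain m where mP: "m \<in> P" and mm: "\<forall>y\<in>P. \<not> lt le y m" using ex_min[of P] ne by blast
  have mle: "\<forall>y\<in>P. le m y" using comp mP mm lt_def by metis
  have hb: "hbv P le = m"
    unfolding hbv_def if_not_P[OF False]
    apply (rule the_equality)
    using mP mle apply blast
    using mle antisym mP by blast
  thus ?thesis using mP mle by simp
qed

definition R :: "'a set \<Rightarrow> ('a \<times> 'a) set" where
  "R S = {(a, b). a \<in> S \<and> b \<in> S \<and> (le a b \<or> le b a)}"

lemma pc_iff: "poset_connected S le \<longleftrightarrow> (\<forall>x\<in>S. \<forall>y\<in>S. (x, y) \<in> (R S)\<^sup>*)"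
  by (simp add: poset_connected_def R_def)

lemma R_mono: "A \<subseteq> B \<Longrightarrow> (R A)\<^sup>* \<subseteq> (R B)\<^sup>*"
  by (rule rtrancl_mono) (auto simp: R_def)

lemma R_sym: "(x, y) \<in> (R S)\<^sup>* \<Longrightarrow> (y, x) \<in> (R S)\<^sup>*"
proof -
  have "(R S)\<inverse> = R S" by (auto simp: R_def)
  moreover assume "(x, y) \<in> (R S)\<^sup>*"
  ultimately show ?thesis by (metis converseI rtrancl_converseI)
qed

lemma conn_union:
  assumes "poset_connected A le" "poset_connected B le" "A \<inter> B \<noteq> {}"
  shows "poset_connected (A \<union> B) le"
proof -
  obtain c where c: "c \<in> A" "c \<in> B" using assms(3) by blast
  have tc: "(x, c) \<in> (R (A \<union> B))\<^sup>*" if "x \<in> A \<union> B" for x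
  proof -
    have "(x, c) \<in> (R A)\<^sup>* \<or> (x, c) \<in> (R B)\<^sup>*" using that assms c unfolding pc_iff by blast
    thus ?thesis using R_mono[of A "A \<union> B"] R_mono[of B "A \<union> B"] by blast
  qed
  show ?thesis unfolding pc_iff
    using tc R_sym by (meson rtrancl_trans)
qed

lemma conn_pair: "le x y \<or> le y x \<Longrightarrow> x \<in> P \<Longrightarrow> y \<in> P \<Longrightarrow> poset_connected {x, y} le"
  unfolding pc_iff
  by (auto simp: R_def intro: r_into_rtrancl)

lemma subtree:
  assumes "S \<subseteq> P" "S \<noteq> {}" "poset_connected S le" shows "rooted_tree S le"
proof -
  have fS: "finite S" using fin assms(1) finite_subset by blast
  have ps: "poset S le" unfolding poset_def using assms(1) refl antisym trans by (meson subsetD)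
  have "card {y\<in>S. covers S le x y} \<le> 1" if x: "x \<in> S" for x
  proof -
    have "y1 = y2" if y: "covers S le x y1" "covers S le x y2" for y1 y2
    proof (rule ccontr)
      assume ne: "y1 \<noteq> y2"
      have S: "y1 \<in> S" "y2 \<in> S" "lt le x y1" "lt le x y2" using y by (auto simp: covers_def)
      have "le y1 y2 \<or> le y2 y1" using tp[of x y1 y2] S x assms(1) by (auto simp: lt_def)
      hence "lt le y1 y2 \<or> lt le y2 y1" using ne by (auto simp: lt_def)
      thus False using y S unfolding covers_def by blast
    qed
    thus ?thesis using card_le_Suc0_iff_eq[of "{y\<in>S. covers S le x y}"] fS by auto
  qed
  thus ?thesis unfolding rooted_tree_def using fS assms ps by blast
qed

lemma singleton_tree: "x \<in> P \<Longrightarrow> rooted_tree {x} le"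
  using subtree[of "{x}"] conn_pair[of x x] refl by auto

definition Mx :: "'a set \<Rightarrow> 'a set set" where
  "Mx G = {T. T \<subseteq> G \<and> rooted_tree T le \<and>
          (\<forall>T'. T \<subseteq> T' \<and> T' \<subseteq> G \<and> rooted_tree T' le \<longrightarrow> T' = T)}"

lemma Mx_D: "T \<in> Mx G \<Longrightarrow> T \<subseteq> G"  "T \<in> Mx G \<Longrightarrow> rooted_tree T le"
  "T \<in> Mx G \<Longrightarrow> T \<subseteq> T' \<Longrightarrow> T' \<subseteq> G \<Longrightarrow> rooted_tree T' le \<Longrightarrow> T' = T"
  unfolding Mx_def by blast+

lemma rt_conn: "rooted_tree T le \<Longrightarrow> poset_connected T le" by (simp add: rooted_tree_def)

lemma M1: assumes G: "G \<subseteq> P" and T: "T \<in> Mx G" and x: "x \<in> T" and y: "y \<in> G"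
  and c: "le x y \<or> le y x" shows "y \<in> T"
proof -
  have TG: "T \<subseteq> G" "rooted_tree T le" using T by (rule Mx_D)+
  have xP: "x \<in> P" and yP: "y \<in> P" using x y TG G by auto
  have i: "T \<inter> {x, y} \<noteq> {}" using x by blast
  have "poset_connected (T \<union> {x, y}) le"
    by (rule conn_union[OF rt_conn[OF TG(2)] conn_pair[OF c xP yP] i])
  hence "rooted_tree (T \<union> {x, y}) le" using subtree[of "T \<union> {x,y}"] G TG xP yP by blast
  hence "T \<union> {x, y} = T" using Mx_D(3)[OF T, of "T \<union> {x, y}"] TG y x by blast
  thus ?thesis by blast
qed

lemma M2: assumes G: "G \<subseteq> P" and T: "T1 \<in> Mx G" "T2 \<in> Mx G" and i: "T1 \<inter> T2 \<noteq> {}"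
  shows "T1 = T2"
proof -
  have TG: "T1 \<subseteq> G" "rooted_tree T1 le" "T2 \<subseteq> G" "rooted_tree T2 le" using T by (auto dest: Mx_D)
  have "poset_connected (T1 \<union> T2) le" by (rule conn_union[OF rt_conn[OF TG(2)] rt_conn[OF TG(4)] i])
  hence "rooted_tree (T1 \<union> T2) le" using subtree[of "T1 \<union> T2"] G TG i by blast
  hence "T1 \<union> T2 = T1" "T1 \<union> T2 = T2"
    using Mx_D(3)[OF T(1), of "T1 \<union> T2"] Mx_D(3)[OF T(2), of "T1 \<union> T2"] TG by blast+
  thus ?thesis by blast
qed

lemma M3: assumes G: "G \<subseteq> P" and x: "x \<in> G" shows "\<exists>T\<in>Mx G. x \<in> T"
proof -
  let ?C = "\<lambda>T. x \<in> T \<and> T \<subseteq> G \<and> rooted_tree T le"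
  have fG: "finite G" using fin G finite_subset by blast
  have "?C {x}" using singleton_tree x G by blast
  moreover have "\<forall>y. ?C y \<longrightarrow> card y < card G + 1"
  proof (intro allI impI)
    fix y assume "?C y" hence "card y \<le> card G" using fG card_mono by blast
    thus "card y < card G + 1" by simp
  qed
  ultimately obtain T where T: "?C T" and Tm: "\<forall>y. ?C y \<longrightarrow> card y \<le> card T"
    using ex_has_greatest_nat[of ?C "{x}" card "card G + 1"] by blast
  have "T \<in> Mx G"
    unfolding Mx_def
  proof (intro CollectI conjI allI impI)
    fix T' assume T': "T \<subseteq> T' \<and> T' \<subseteq> G \<and> rooted_tree T' le"
    hence "card T' \<le> card T" using Tm T by blast
    moreover have "finite T'" using T' fG finite_subset by blast
    ultimately show "T' = T" using T' card_seteq[of T' T] by blast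
  qed (use T in auto)
  thus ?thesis using T by blast
qed

lemma M_sum:
  assumes G: "G \<subseteq> P"
  shows "(\<Sum>T\<in>Mx G. \<Sum>x\<in>T. f (omega T le x)) = (\<Sum>x\<in>G. f (card {y\<in>G. le x y}))"
proof -
  have fG: "finite G" using fin G finite_subset by blast
  have "(\<Sum>T\<in>Mx G. \<Sum>x\<in>T. f (omega T le x)) = (\<Sum>T\<in>Mx G. \<Sum>x\<in>T. f (card {y\<in>G. le x y}))"
  proof (rule sum.cong[OF HOL.refl], rule sum.cong[OF HOL.refl])
    fix T x assume T: "T \<in> Mx G" and x: "x \<in> T"
    have "{y\<in>T. le x y} = {y\<in>G. le x y}" using M1[OF G T x] T by (auto simp: Mx_def)
    thus "f (omega T le x) = f (card {y\<in>G. le x y})" by (simp add: omega_def)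
  qed
  also have "\<dots> = (\<Sum>x\<in>\<Union>(Mx G). f (card {y\<in>G. le x y}))"
    by (rule sum.Union_disjoint[symmetric, unfolded comp_def])
      (use fG M2[OF G] in \<open>auto simp: Mx_def intro: finite_subset\<close>)
  also have "\<Union>(Mx G) = G" using M3[OF G] by (auto simp: Mx_def)
  finally show ?thesis .
qed

end


context rtree begin

definition chain :: "'a set \<Rightarrow> bool" where
  "chain S \<longleftrightarrow> (\<forall>x\<in>S. \<forall>y\<in>S. le x y \<or> le y x)"

lemma chains_decomp:
  assumes X: "X \<subseteq> P"
  shows "{S. S \<subseteq> X \<and> chain S} = insert {} (\<Union>x\<in>X. insert x ` Pow {y\<in>X. lt le x y})"
proof (intro equalityI subsetI)
  fix S assume S: "S \<in> {S. S \<subseteq> X \<and> chain S}"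
  show "S \<in> insert {} (\<Union>x\<in>X. insert x ` Pow {y\<in>X. lt le x y})"
  proof (cases "S = {}")
    case True thus ?thesis by simp
  next
    case False
    have SP: "S \<subseteq> P" using S X by auto
    obtain m where m: "m \<in> S" "\<forall>y\<in>S. \<not> lt le y m" using ex_min[OF SP False] by blast
    have "S - {m} \<subseteq> {y\<in>X. lt le m y}"
    proof
      fix y assume y: "y \<in> S - {m}"
      have "le m y \<or> le y m" using S m y unfolding chain_def by blast
      hence "lt le m y" using m y by (auto simp: lt_def)
      thus "y \<in> {y\<in>X. lt le m y}" using y S by auto
    qed
    moreover have "S = insert m (S - {m})" using m by blast
    ultimately show ?thesis using m S by blast
  qed
next
  fix S assume S: "S \<in> insert {} (\<Union>x\<in>X. insert x ` Pow {y\<in>X. lt le x y})"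
  show "S \<in> {S. S \<subseteq> X \<and> chain S}"
  proof (cases "S = {}")
    case True thus ?thesis by (simp add: chain_def)
  next
    case False
    then obtain x A where x: "x \<in> X" and A: "A \<subseteq> {y\<in>X. lt le x y}" and SA: "S = insert x A" using S by blast
    have "chain S" unfolding chain_def
    proof (intro ballI)
      fix a b assume ab: "a \<in> S" "b \<in> S"
      have "le x a" "le x b" using ab SA A x X refl by (auto simp: lt_def)
      moreover have "a \<in> P" "b \<in> P" "x \<in> P" using ab SA A x X by auto
      ultimately show "le a b \<or> le b a" using tp by blast
    qed
    thus ?thesis using SA A x by auto
  qed
qed

lemma chains_card:
  assumes X: "X \<subseteq> P"
  shows "card {S. S \<subseteq> X \<and> chain S} = 1 + (\<Sum>x\<in>X. 2 ^ card {y\<in>X. lt le x y})"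
proof -
  have fX: "finite X" using fin X finite_subset by blast
  let ?F = "\<lambda>x. insert x ` Pow {y\<in>X. lt le x y}"
  have fF: "finite (?F x)" for x using fX by simp
  have cF: "card (?F x) = 2 ^ card {y\<in>X. lt le x y}" for x
  proof -
    have "inj_on (insert x) (Pow {y\<in>X. lt le x y})"
    proof (rule inj_onI)
      fix A B assume AB: "A \<in> Pow {y\<in>X. lt le x y}" "B \<in> Pow {y\<in>X. lt le x y}" "insert x A = insert x B"
      have "x \<notin> A" "x \<notin> B" using AB(1,2) lt_irrefl by blast+
      thus "A = B" using AB(3) by (metis Diff_insert_absorb)
    qed
    hence "card (?F x) = card (Pow {y\<in>X. lt le x y})" by (rule card_image)
    thus ?thesis using fX by (simp add: card_Pow)
  qed
  have disj: "\<forall>i\<in>X. \<forall>j\<in>X. i \<noteq> j \<longrightarrow> ?F i \<inter> ?F j = {}"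
  proof (intro ballI impI)
    fix i j assume ij: "i \<in> X" "j \<in> X" "i \<noteq> j"
    show "?F i \<inter> ?F j = {}"
    proof (rule ccontr)
      assume "?F i \<inter> ?F j \<noteq> {}"
      then obtain A B where A: "A \<subseteq> {y\<in>X. lt le i y}" and B: "B \<subseteq> {y\<in>X. lt le j y}"
        and e: "insert i A = insert j B" by blast
      have "j \<in> A" using e ij by (metis insertE insertI1)
      hence "lt le i j" using A by blast
      have "i \<in> B" using e ij by (metis insertE insertI1)
      hence "lt le j i" using B by blast
      thus False using \<open>lt le i j\<close> lt_asym ij X by blast
    qed
  qed
  have ne: "{} \<notin> (\<Union>x\<in>X. ?F x)" by blast
  have fU: "finite (\<Union>x\<in>X. ?F x)" using fX fF by blast
  have "card {S. S \<subseteq> X \<and> chain S} = card (insert {} (\<Union>x\<in>X. ?F x))"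
    using chains_decomp[OF X] by simp
  also have "\<dots> = 1 + card (\<Union>x\<in>X. ?F x)" using ne fU by simp
  also have "card (\<Union>x\<in>X. ?F x) = (\<Sum>x\<in>X. card (?F x))"
    by (rule card_UN_disjoint[OF fX _ disj]) (simp add: fF)
  finally show ?thesis using cF by simp
qed

lemma chain_pow_card:
  assumes X: "X \<subseteq> P" and c: "chain X"
  shows "card {S. S \<subseteq> X \<and> chain S} = 2 ^ card X"
proof -
  have fX: "finite X" using fin X finite_subset by blast
  have "{S. S \<subseteq> X \<and> chain S} = Pow X" using c by (auto simp: chain_def)
  thus ?thesis using fX by (simp add: card_Pow)
qed

end


context rtree begin

definition root where "root = (SOME r. r \<in> P \<and> (\<forall>x\<in>P. le x r))"

lemma root: "root \<in> P" "x \<in> P \<Longrightarrow> le x root"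
proof -
  have "root \<in> P \<and> (\<forall>x\<in>P. le x root)" unfolding root_def by (rule someI_ex) (rule ex_root[unfolded Bex_def])
  thus "root \<in> P" "x \<in> P \<Longrightarrow> le x root" by blast+
qed

lemma maximal_iff: "maximal P le x \<longleftrightarrow> x = root"
proof
  assume "maximal P le x" thus "x = root" using root unfolding maximal_def by blast
next
  assume "x = root" thus "maximal P le x" using root antisym unfolding maximal_def by blast
qed

lemma not_lt_root: "x \<in> P \<Longrightarrow> \<not> lt le root x"
  using root antisym by (auto simp: lt_def)

lemma lt_root: "x \<in> P \<Longrightarrow> x \<noteq> root \<Longrightarrow> lt le x root"
  using root by (auto simp: lt_def)

lemma card_below_mono: "a \<in> P \<Longrightarrow> b \<in> P \<Longrightarrow> lt le a b \<Longrightarrow> card {z\<in>P. lt le z a} < card {z\<in>P. lt le z b}"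
proof -
  assume ab: "a \<in> P" "b \<in> P" "lt le a b"
  have "{z\<in>P. lt le z a} \<subset> {z\<in>P. lt le z b}"
  proof
    show "{z\<in>P. lt le z a} \<subseteq> {z\<in>P. lt le z b}" using lt_trans ab by blast
    show "{z\<in>P. lt le z a} \<noteq> {z\<in>P. lt le z b}" using ab lt_irrefl by blast
  qed
  thus ?thesis using fin psubset_card_mono[of "{z\<in>P. lt le z b}"] by auto
qed

end

locale plab = rtree +
  fixes M :: "'a \<Rightarrow> nat"
  assumes lab: "M \<in> labelings P"
begin

abbreviation "pc \<equiv> pchain P le M"
abbreviation "ls \<equiv> lsucc P le M"

lemma bijM: "bij_betw M P {1..card P}" using lab by (simp add: labelings_def)
lemma injM: "x \<in> P \<Longrightarrow> y \<in> P \<Longrightarrow> M x = M y \<Longrightarrow> x = y"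
  using bijM unfolding bij_betw_def inj_on_def by blast
lemma M_range: "x \<in> P \<Longrightarrow> 1 \<le> M x \<and> M x \<le> card P"
  using bijM unfolding bij_betw_def by auto

lemma nonmax_ex: "v \<in> P \<Longrightarrow> v \<noteq> root \<Longrightarrow> \<exists>y\<in>P. lt le v y"
  using lt_root root by blast

lemma ls_props:
  assumes v: "v \<in> P" "v \<noteq> root"
  shows "ls v \<in> P \<and> lt le v (ls v) \<and> (\<forall>z\<in>P. lt le v z \<longrightarrow> M (ls v) \<le> M z)"
proof -
  obtain y0 where y0: "y0 \<in> P" "lt le v y0" using nonmax_ex v by blast
  have "\<exists>y. (y \<in> P \<and> lt le v y) \<and> (\<forall>z. z \<in> P \<and> lt le v z \<longrightarrow> M y \<le> M z)"
    using ex_has_least_nat[of "\<lambda>y. y \<in> P \<and> lt le v y" y0 M] y0 by blast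
  hence "\<exists>y. y \<in> P \<and> lt le v y \<and> (\<forall>z\<in>P. lt le v z \<longrightarrow> M y \<le> M z)" by blast
  thus ?thesis unfolding lsucc_def by (rule someI_ex)
qed

lemma ls_unique:
  assumes v: "v \<in> P" "v \<noteq> root" and w: "w \<in> P" "lt le v w" "\<forall>z\<in>P. lt le v z \<longrightarrow> M w \<le> M z"
  shows "ls v = w"
proof -
  have "M (ls v) \<le> M w" "M w \<le> M (ls v)" using ls_props[OF v] w by auto
  thus ?thesis using injM ls_props[OF v] w by (meson le_antisym)
qed

lemma pc_P: "x \<in> pc \<Longrightarrow> x \<in> P"
  by (induction rule: pchain.induct) (use ls_props maximal_iff in auto)

lemma pc_ge_start: "x \<in> pc \<Longrightarrow> s \<in> P \<Longrightarrow> M s = 1 \<Longrightarrow> le s x"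
proof (induction rule: pchain.induct)
  case (start x) thus ?case using injM refl by metis
next
  case (step v)
  have "v \<in> P" using step pc_P by blast
  thus ?case using ls_props[of v] step maximal_iff trans[of s v "ls v"] by (auto simp: lt_def)
qed

lemma pc_chain: "x \<in> pc \<Longrightarrow> y \<in> pc \<Longrightarrow> le x y \<or> le y x"
proof (induction arbitrary: y rule: pchain.induct)
  case (start x) thus ?case using pc_ge_start by blast
next
  case (step u)
  have uP: "u \<in> P" using step pc_P by blast
  have lsu: "ls u \<in> P" "lt le u (ls u)" using ls_props[OF uP] step maximal_iff by auto
  have yP: "y \<in> P" using step pc_P by blast
  from step.IH[OF step.prems] show ?case
  proof
    assume "le u y" thus ?thesis using tp[OF uP lsu(1) yP] lsu by (auto simp: lt_def)
  next
    assume "le y u" thus ?thesis using trans[OF yP uP lsu(1)] lsu by (auto simp: lt_def)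
  qed
qed

lemma nobad_aux:
  "\<forall>w v. card {z\<in>P. lt le z w} = N \<longrightarrow> v \<in> pc \<longrightarrow> w \<in> pc \<longrightarrow> lt le v w \<longrightarrow> lt le w (ls v) \<longrightarrow> False"
proof (induction N rule: less_induct)
  case (less N)
  show ?case
  proof (intro allI impI)
    fix w v assume N: "card {z\<in>P. lt le z w} = N" and v: "v \<in> pc" and w: "w \<in> pc"
      and vw: "lt le v w" and wl: "lt le w (ls v)"
    have IH: "\<And>a b. card {z\<in>P. lt le z a} < N \<Longrightarrow> b \<in> pc \<Longrightarrow> a \<in> pc \<Longrightarrow> lt le b a \<Longrightarrow> lt le a (ls b) \<Longrightarrow> False"
      using less.IH by blast
    have vP: "v \<in> P" and wP: "w \<in> P" using v w pc_P by auto
    have vr: "v \<noteq> root" using not_lt_root vw wP by blast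
    have lsv: "ls v \<in> P" "lt le v (ls v)" using ls_props[OF vP vr] by auto
    from w show False
    proof (cases rule: pchain.cases)
      case (start)
      hence "le w v" using pc_ge_start[OF v] wP by blast
      thus False using vw vP wP antisym by (auto simp: lt_def)
    next
      case (step w')
      have w'P: "w' \<in> P" using step pc_P by blast
      have w'r: "w' \<noteq> root" using step maximal_iff by blast
      have w'w: "lt le w' w" using ls_props[OF w'P w'r] step by simp
      have "le w' v \<or> le v w'" using pc_chain step v by blast
      moreover
      { assume "w' = v" hence False using wl step lt_irrefl by blast }
      moreover
      { assume "lt le w' v"
        have "card {z\<in>P. lt le z v} < N" using card_below_mono[OF vP wP vw] N by simp
        moreover have "lt le v (ls w')" using vw step by simp
        ultimately have False using IH[of v w'] step \<open>lt le w' v\<close> v by blast }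
      moreover
      { assume "lt le v w'"
        have "card {z\<in>P. lt le z w'} < N" using card_below_mono[OF w'P wP w'w] N by simp
        moreover have "lt le w' (ls v)" using lt_trans[OF w'P wP lsv(1) w'w wl] .
        ultimately have False using IH[of w' v] step \<open>lt le v w'\<close> v by blast }
      ultimately show False by (auto simp: lt_def)
    qed
  qed
qed

lemma nobad: "v \<in> pc \<Longrightarrow> w \<in> pc \<Longrightarrow> lt le v w \<Longrightarrow> lt le w (ls v) \<Longrightarrow> False"
  using nobad_aux[rule_format, OF HOL.refl] by metis

lemma LS:
  assumes v: "v \<in> pc" "v \<noteq> root" and u: "u \<in> pc" "lt le v u"
  shows "le (ls v) u"
proof -
  have vP: "v \<in> P" using v pc_P by blast
  have "\<not> maximal P le v" using v(2) maximal_iff by blast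
  hence "ls v \<in> pc" by (rule pchain.step[OF v(1)])
  hence "le (ls v) u \<or> le u (ls v)" using pc_chain u by blast
  moreover have "\<not> lt le u (ls v)" using nobad[OF v(1) u(1) u(2)] by blast
  ultimately show ?thesis by (auto simp: lt_def)
qed

lemma root_in_pc: "root \<in> pc"
proof -
  have "1 \<in> {1..card P}" using fin ne by (simp add: Suc_leI card_gt_0_iff)
  then obtain s where s: "s \<in> P" "M s = 1" using bijM unfolding bij_betw_def by (metis (no_types, lifting) imageE)
  hence "s \<in> pc" by (rule pchain.start)
  hence ne': "pc \<noteq> {}" by blast
  have sub: "pc \<subseteq> P" using pc_P by blast
  obtain m where m: "m \<in> pc" "\<forall>y\<in>pc. \<not> lt le m y" using ex_max[OF sub ne'] by blast
  show ?thesis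
  proof (rule ccontr)
    assume "root \<notin> pc"
    hence "m \<noteq> root" using m by blast
    hence "\<not> maximal P le m" using maximal_iff by blast
    hence "ls m \<in> pc" by (rule pchain.step[OF m(1)])
    moreover have "lt le m (ls m)" using ls_props[OF pc_P[OF m(1)] \<open>m \<noteq> root\<close>] by blast
    ultimately
    show False using m by blast
  qed
qed

end


locale mt = rtree +
  fixes L :: "'a \<Rightarrow> nat"
  assumes bijL: "bij_betw L P {1..card P}"
    and topL: "\<forall>x\<in>P. L x = card P \<longrightarrow> maximal P le x"
begin

lemma injL: "x \<in> P \<Longrightarrow> y \<in> P \<Longrightarrow> L x = L y \<Longrightarrow> x = y"
  using bijL unfolding bij_betw_def inj_on_def by blast
lemma L_range: "x \<in> P \<Longrightarrow> 1 \<le> L x \<and> L x \<le> card P"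
  using bijL unfolding bij_betw_def by auto
lemma L_root: "L root = card P"
proof -
  have "card P \<in> {1..card P}" using fin ne by (simp add: Suc_leI card_gt_0_iff)
  then obtain y where y: "y \<in> P" "L y = card P" using bijL unfolding bij_betw_def by (metis (no_types, lifting) imageE)
  hence "y = root" using topL maximal_iff by blast
  thus ?thesis using y by simp
qed
lemma L_lt: "x \<in> P \<Longrightarrow> x \<noteq> root \<Longrightarrow> L x < card P"
  using L_range L_root injL root(1) by (metis le_neq_implies_less)

definition "F = {M \<in> labelings P. \<forall>x\<in>P. promote P le M x = L x}"
definition "Ch = {C. C \<subseteq> P \<and> root \<in> C \<and> chain C \<and> (\<forall>x\<in>C. golden P le L x)}"

end

locale pre = mt P le L + plab P le M for P :: "'a set" and le L M +
  assumes promL: "\<forall>x\<in>P. promote P le M x = L x"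
begin

lemma out_val: "x \<in> P \<Longrightarrow> x \<notin> pc \<Longrightarrow> M x = L x + 1"
  using promL M_range[of x] by (auto simp: promote_def)

lemma in_val: "v \<in> pc \<Longrightarrow> v \<noteq> root \<Longrightarrow> M (ls v) = L v + 1"
proof -
  assume v: "v \<in> pc" "v \<noteq> root"
  have vP: "v \<in> P" using v pc_P by blast
  have "promote P le M v = M (ls v) - 1" using v maximal_iff by (simp add: promote_def)
  moreover have "1 \<le> M (ls v)" using M_range ls_props[OF vP v(2)] by blast
  ultimately show ?thesis using promL vP by auto
qed

lemma pc_golden: "v \<in> pc \<Longrightarrow> golden P le L v"
proof -
  assume v: "v \<in> pc"
  have vP: "v \<in> P" using v pc_P by blast
  show ?thesis
  proof (cases "v = root")
    case True thus ?thesis using not_lt_root vP by (simp add: golden_def)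
  next
    case vr: False
    have lsv: "ls v \<in> P" "lt le v (ls v)" "\<forall>z\<in>P. lt le v z \<longrightarrow> M (ls v) \<le> M z" using ls_props[OF vP vr] by auto
    have lsvpc: "ls v \<in> pc" using pchain.step[OF v] vr maximal_iff by blast
    have iv: "M (ls v) = L v + 1" by (rule in_val[OF v vr])
    have "L v < L y" if y: "y \<in> P" "lt le v y" for y
    proof (cases "y \<in> pc")
      case False
      have "M (ls v) \<le> M y" using lsv y by blast
      moreover have "ls v \<noteq> y" using False lsvpc by blast
      ultimately have "M (ls v) < M y" using injM lsv y by (meson le_neq_implies_less)
      thus ?thesis using iv out_val[OF y(1) False] by simp
    next
      case ypc: True
      show ?thesis
      proof (cases "y = root")
        case True thus ?thesis using L_lt vP vr L_root by simp
      next
        case yr: False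
        have lvy: "le (ls v) y" using LS[OF v vr ypc y(2)] .
        have lsy: "ls y \<in> P" "lt le y (ls y)" using ls_props[OF y(1) yr] by auto
        have "lt le (ls v) (ls y)" using le_lt_trans[OF lsv(1) y(1) lsy(1) lvy lsy(2)] .
        hence ne: "ls v \<noteq> ls y" by (auto simp: lt_def)
        have "lt le v (ls y)" using lt_trans[OF vP y(1) lsy(1) y(2) lsy(2)] .
        hence "M (ls v) \<le> M (ls y)" using lsv lsy by blast
        hence "M (ls v) < M (ls y)" using ne injM lsv lsy by (meson le_neq_implies_less)
        thus ?thesis using iv in_val[OF ypc yr] by simp
      qed
    qed
    thus ?thesis using vP by (simp add: golden_def)
  qed
qed

lemma pc_Ch: "pc \<in> Ch"
  unfolding Ch_def using pc_P root_in_pc pc_chain pc_golden by (auto simp: chain_def)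

end

context mt begin

lemma F_pre: "M \<in> F \<Longrightarrow> pre P le L M"
  unfolding F_def pre_def pre_axioms_def plab_def plab_axioms_def mt_def
  using mt_axioms rtree_axioms by (auto simp: mt_def)

lemma F_inj:
  assumes M1: "M1 \<in> F" and M2: "M2 \<in> F" and eq: "pchain P le M1 = pchain P le M2"
  shows "M1 = M2"
proof
  fix x
  interpret A: pre P le L M1 using F_pre[OF M1] .
  interpret B: pre P le L M2 using F_pre[OF M2] .
  show "M1 x = M2 x"
  proof (cases "x \<in> P")
    case False thus ?thesis using A.lab B.lab by (simp add: labelings_def)
  next
    case xP: True
    show ?thesis
    proof (cases "x \<in> pchain P le M1")
      case False thus ?thesis using A.out_val B.out_val xP eq by simp
    next
      case True
      thus ?thesis
      proof (cases rule: pchain.cases)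
        case start
        have "x \<in> pchain P le M2" using True eq by simp
        thus ?thesis
        proof (cases rule: pchain.cases)
          case start2: start thus ?thesis using start by simp
        next
          case (step v)
          have vr: "v \<noteq> root" using step maximal_iff by blast
          have vP: "v \<in> P" using step B.pc_P by blast
          have "lt le v x" using B.ls_props[OF vP vr] step by simp
          moreover have "le x v" using A.pc_ge_start[of v x] step eq xP start by simp
          ultimately show ?thesis using lt_asym[of v x] vP xP antisym by (auto simp: lt_def)
        qed
      next
        case (step v)
        have vr: "v \<noteq> root" using step maximal_iff by blast
        have vP: "v \<in> P" using step A.pc_P by blast
        have v2: "v \<in> pchain P le M2" using step eq by simp
        have l1: "A.ls v \<in> pchain P le M2" "lt le v (A.ls v)"
          using True step eq A.ls_props[OF vP vr] by auto
        have l2: "B.ls v \<in> pchain P le M1" "lt le v (B.ls v)"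
          using pchain.step[OF v2] vr maximal_iff B.ls_props[OF vP vr] eq by auto
        have "le (A.ls v) (B.ls v)" using A.LS[OF step(2) vr l2] .
        moreover have "le (B.ls v) (A.ls v)" using B.LS[OF v2 vr l1] .
        ultimately have "A.ls v = B.ls v" using antisym A.ls_props[OF vP vr] B.ls_props[OF vP vr] by blast
        thus ?thesis using A.in_val[OF step(2) vr] B.in_val[OF v2 vr] step by simp
      qed
    qed
  qed
qed

end


locale cons = mt +
  fixes C :: "'a set"
  assumes CP: "C \<subseteq> P" and Croot: "root \<in> C" and Cch: "chain C"
    and Cg: "\<forall>x\<in>C. golden P le L x"
begin

definition prd where "prd x = (THE v. v \<in> C \<and> lt le v x \<and> (\<forall>u\<in>C. lt le u x \<longrightarrow> le u v))"

definition Mc where "Mc x = (if x \<notin> P then 0 else if x \<notin> C then L x + 1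
   else if (\<exists>v\<in>C. lt le v x) then L (prd x) + 1 else 1)"

lemma comp: "x \<in> C \<Longrightarrow> y \<in> C \<Longrightarrow> le x y \<or> le y x" using Cch by (simp add: chain_def)

lemma comp_lt: "x \<in> C \<Longrightarrow> y \<in> C \<Longrightarrow> x = y \<or> lt le x y \<or> lt le y x"
  using comp by (auto simp: lt_def)

lemma prd: assumes x: "x \<in> C" and ex: "\<exists>v\<in>C. lt le v x"
  shows "prd x \<in> C \<and> lt le (prd x) x \<and> (\<forall>u\<in>C. lt le u x \<longrightarrow> le u (prd x))"
proof -
  have sub: "{v\<in>C. lt le v x} \<subseteq> P" "{v\<in>C. lt le v x} \<noteq> {}" using CP ex by auto
  obtain m where m: "m \<in> C" "lt le m x" "\<forall>y\<in>{v\<in>C. lt le v x}. \<not> lt le m y"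
    using ex_max[OF sub] by blast
  have mg: "\<forall>u\<in>C. lt le u x \<longrightarrow> le u m"
  proof (intro ballI impI)
    fix u assume u: "u \<in> C" "lt le u x"
    have "\<not> lt le m u" using m u by blast
    thus "le u m" using comp_lt[OF u(1) m(1)] refl CP u by (auto simp: lt_def)
  qed
  have "prd x = m" unfolding prd_def
  proof (rule the_equality)
    show "m \<in> C \<and> lt le m x \<and> (\<forall>u\<in>C. lt le u x \<longrightarrow> le u m)" using m mg by blast
  next
    fix v assume v: "v \<in> C \<and> lt le v x \<and> (\<forall>u\<in>C. lt le u x \<longrightarrow> le u v)"
    hence "le m v" "le v m" using m mg by blast+
    thus "v = m" using antisym CP v m by blast
  qed
  thus ?thesis using m mg by simp
qed

lemma prd_eq: assumes v: "v \<in> C" and w: "w \<in> C" "lt le v w"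
   and nb: "\<forall>u\<in>C. lt le v u \<longrightarrow> \<not> lt le u w"
  shows "prd w = v"
proof -
  have p: "prd w \<in> C" "lt le (prd w) w" "le v (prd w)" using prd[OF w(1)] v w by blast+
  have "\<not> lt le v (prd w)" using nb p by blast
  thus ?thesis using p by (auto simp: lt_def)
qed

lemma golden_lt: "v \<in> C \<Longrightarrow> y \<in> P \<Longrightarrow> lt le v y \<Longrightarrow> L v < L y"
  using Cg by (auto simp: golden_def)

lemma Mc_out: "x \<in> P \<Longrightarrow> x \<notin> C \<Longrightarrow> Mc x = L x + 1" by (simp add: Mc_def)
lemma Mc_prd: "x \<in> C \<Longrightarrow> \<exists>v\<in>C. lt le v x \<Longrightarrow> Mc x = L (prd x) + 1"
  using CP unfolding Mc_def by (simp add: subset_iff)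
lemma Mc_one: "x \<in> C \<Longrightarrow> \<not> (\<exists>v\<in>C. lt le v x) \<Longrightarrow> Mc x = 1"
  using CP unfolding Mc_def by (simp add: subset_iff)

lemma Mc_range: "x \<in> P \<Longrightarrow> Mc x \<in> {1..card P}"
proof -
  assume x: "x \<in> P"
  have cp: "1 \<le> card P" using fin ne by (simp add: Suc_leI card_gt_0_iff)
  show ?thesis
  proof (cases "x \<in> C")
    case False
    hence "x \<noteq> root" using Croot by blast
    hence "L x < card P" using L_lt[OF x] by blast
    thus ?thesis using Mc_out[OF x False] by simp
  next
    case True
    show ?thesis
    proof (cases "\<exists>v\<in>C. lt le v x")
      case ex: True
      have pp: "prd x \<in> C" "lt le (prd x) x" using prd[OF True ex] by blast+
      have p: "prd x \<in> P" "lt le (prd x) x" using pp CP by blast+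
      have "prd x \<noteq> root"
      proof
        assume "prd x = root" thus False using not_lt_root[OF x] p(2) by simp
      qed
      hence "L (prd x) < card P" using L_lt[OF p(1)] by blast
      thus ?thesis using Mc_prd[OF True ex] by simp
    next
      case False
      thus ?thesis using Mc_one[OF True False] cp by simp
    qed
  qed
qed

lemma Mc_inj: "x \<in> P \<Longrightarrow> y \<in> P \<Longrightarrow> Mc x = Mc y \<Longrightarrow> x = y"
proof -
  assume x: "x \<in> P" and y: "y \<in> P" and e: "Mc x = Mc y"
  have Lp: "\<And>z. z \<in> P \<Longrightarrow> 1 \<le> L z" using L_range by blast
  note k1 = Mc_out and k2 = Mc_prd and k3 = Mc_one
  have pP: "prd z \<in> P" "prd z \<in> C" "lt le (prd z) z" if "z \<in> C" "\<exists>v\<in>C. lt le v z" for z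
  proof -
    have "prd z \<in> C" "lt le (prd z) z" using prd[OF that] by blast+
    thus "prd z \<in> P" "prd z \<in> C" "lt le (prd z) z" using CP by blast+
  qed
  show "x = y"
  proof (cases "x \<in> C")
    case xC: False
    show ?thesis
    proof (cases "y \<in> C")
      case False thus ?thesis using k1 x y xC e injL by simp
    next
      case yC: True
      show ?thesis
      proof (cases "\<exists>v\<in>C. lt le v y")
        case True
        hence "L x = L (prd y)" using k1[OF x xC] k2[OF yC True] e by simp
        hence "x = prd y" using injL x pP[OF yC True] by blast
        thus ?thesis using pP[OF yC True] xC by blast
      next
        case False thus ?thesis using k1[OF x xC] k3[OF yC False] e Lp[OF x] by simp
      qed
    qed
  next
    case xC: True
    show ?thesis
    proof (cases "y \<in> C")
      case yC: False
      show ?thesis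
      proof (cases "\<exists>v\<in>C. lt le v x")
        case True
        hence "L y = L (prd x)" using k1[OF y yC] k2[OF xC True] e by simp
        hence "y = prd x" using injL y pP[OF xC True] by blast
        thus ?thesis using pP[OF xC True] yC by blast
      next
        case False thus ?thesis using k1[OF y yC] k3[OF xC False] e Lp[OF y] by simp
      qed
    next
      case yC: True
      show ?thesis
      proof (cases "\<exists>v\<in>C. lt le v x")
        case ex: True
        show ?thesis
        proof (cases "\<exists>v\<in>C. lt le v y")
          case ey: True
          have "L (prd x) = L (prd y)" using k2[OF xC ex] k2[OF yC ey] e by simp
          hence pe: "prd x = prd y" using injL pP[OF xC ex] pP[OF yC ey] by blast
          show ?thesis
          proof (rule ccontr)
            assume "x \<noteq> y"
            hence "lt le x y \<or> lt le y x" using comp_lt xC yC by blast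
            thus False
            proof
              assume "lt le x y"
              hence "le x (prd y)" using prd[OF yC ey] xC by blast
              thus False using pe pP[OF xC ex] x lt_asym by (auto simp: lt_def dest: antisym)
            next
              assume "lt le y x"
              hence "le y (prd x)" using prd[OF xC ex] yC by blast
              thus False using pe pP[OF yC ey] y lt_asym by (auto simp: lt_def dest: antisym)
            qed
          qed
        next
          case False
          have "1 \<le> L (prd x)" using Lp pP(1)[OF xC ex] by blast
          thus ?thesis using k2[OF xC ex] k3[OF yC False] e by simp
        qed
      next
        case nx: False
        show ?thesis
        proof (cases "\<exists>v\<in>C. lt le v y")
          case ey: True
          have "1 \<le> L (prd y)" using Lp pP(1)[OF yC ey] by blast
          thus ?thesis using k3[OF xC nx] k2[OF yC ey] e by simp
        next
          case False
          thus ?thesis using nx comp_lt[OF xC yC] xC yC by blast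
        qed
      qed
    qed
  qed
qed

lemma Mc_lab: "Mc \<in> labelings P"
proof -
  have inj: "inj_on Mc P" using Mc_inj by (auto simp: inj_on_def)
  have sub: "Mc ` P \<subseteq> {1..card P}" using Mc_range by blast
  have "card (Mc ` P) = card {1..card P}" using card_image[OF inj] by simp
  hence "Mc ` P = {1..card P}" using sub by (simp add: card_subset_eq)
  thus ?thesis using inj unfolding labelings_def bij_betw_def by (auto simp: Mc_def)
qed

end

sublocale cons \<subseteq> plab P le Mc
  by (unfold_locales) (rule Mc_lab)

context cons begin

lemma nx_ex: assumes v: "v \<in> C" "v \<noteq> root"
  shows "\<exists>w\<in>C. lt le v w \<and> (\<forall>u\<in>C. lt le v u \<longrightarrow> \<not> lt le u w)"
proof -
  have vP: "v \<in> P" using v CP by blast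
  have sub: "{u\<in>C. lt le v u} \<subseteq> P" "{u\<in>C. lt le v u} \<noteq> {}" using CP Croot lt_root[OF vP v(2)] by auto
  obtain w where "w \<in> {u\<in>C. lt le v u}" "\<forall>y\<in>{u\<in>C. lt le v u}. \<not> lt le y w" using ex_min[OF sub] by blast
  thus ?thesis by blast
qed

lemma ls_Mc: assumes v: "v \<in> C" "v \<noteq> root" and w: "w \<in> C" "lt le v w"
  and nb: "\<forall>u\<in>C. lt le v u \<longrightarrow> \<not> lt le u w"
  shows "ls v = w" "Mc w = L v + 1"
proof -
  have vP: "v \<in> P" and wP: "w \<in> P" using v w CP by auto
  have pw: "prd w = v" by (rule prd_eq[OF v(1) w nb])
  show Mw: "Mc w = L v + 1" using w wP pw v by (auto simp: Mc_def)
  have "\<forall>z\<in>P. lt le v z \<longrightarrow> Mc w \<le> Mc z"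
  proof (intro ballI impI)
    fix z assume z: "z \<in> P" "lt le v z"
    show "Mc w \<le> Mc z"
    proof (cases "z \<in> C")
      case False thus ?thesis using Mw z golden_lt[OF v(1) z] by (simp add: Mc_def)
    next
      case zC: True
      show ?thesis
      proof (cases "z = w")
        case True thus ?thesis by simp
      next
        case False
        have "\<not> lt le z w" using nb zC z by blast
        hence wz: "lt le w z" using comp_lt[OF zC w(1)] False by blast
        have ez: "\<exists>v\<in>C. lt le v z" using wz w by blast
        have p: "prd z \<in> C" "le w (prd z)" using prd[OF zC ez] w wz by blast+
        have "lt le v (prd z)" using lt_le_trans[OF vP wP _ w(2) p(2)] p CP by blast
        hence "L v < L (prd z)" using golden_lt[OF v(1)] p CP by blast
        thus ?thesis using Mw zC z ez by (simp add: Mc_def)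
      qed
    qed
  qed
  thus "ls v = w" using ls_unique[OF vP v(2) wP w(2)] by blast
qed

lemma pc_sub: "x \<in> pc \<Longrightarrow> x \<in> C"
proof (induction rule: pchain.induct)
  case (start x)
  show ?case
  proof (rule ccontr)
    assume "x \<notin> C" thus False using start L_range[of x] by (simp add: Mc_def)
  qed
next
  case (step v)
  have vr: "v \<noteq> root" using step maximal_iff by blast
  obtain w where w: "w \<in> C" "lt le v w" "\<forall>u\<in>C. lt le v u \<longrightarrow> \<not> lt le u w" using nx_ex[OF step.IH vr] by blast
  have "ls v = w" using ls_Mc(1)[OF step.IH vr w] .
  thus ?case using w by simp
qed

lemma C_sub_aux: "\<forall>x. card {u\<in>C. lt le u x} = N \<longrightarrow> x \<in> C \<longrightarrow> x \<in> pc"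
proof (induction N rule: less_induct)
  case (less N)
  show ?case
  proof (intro allI impI)
    fix x assume N: "card {u\<in>C. lt le u x} = N" and x: "x \<in> C"
    have xP: "x \<in> P" using x CP by blast
    show "x \<in> pc"
    proof (cases "\<exists>v\<in>C. lt le v x")
      case False
      hence "Mc x = 1" using x xP by (simp add: Mc_def)
      thus ?thesis by (rule pchain.start[OF xP])
    next
      case True
      have p: "prd x \<in> C" "lt le (prd x) x" "\<forall>u\<in>C. lt le u x \<longrightarrow> le u (prd x)" using prd[OF x True] by blast+
      let ?v = "prd x"
      have vP: "?v \<in> P" using p CP by blast
      have "{u\<in>C. lt le u ?v} \<subset> {u\<in>C. lt le u x}"
      proof
        show "{u\<in>C. lt le u ?v} \<subseteq> {u\<in>C. lt le u x}" using lt_trans[OF _ vP xP _ p(2)] CP by blast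
        show "{u\<in>C. lt le u ?v} \<noteq> {u\<in>C. lt le u x}" using p lt_irrefl by blast
      qed
      hence "card {u\<in>C. lt le u ?v} < N" using N fin CP finite_subset psubset_card_mono[of "{u\<in>C. lt le u x}"]
        by (metis (no_types, lifting) mem_Collect_eq subsetI)
      hence vpc: "?v \<in> pc" using less.IH p(1) by blast
      have vr: "?v \<noteq> root" using not_lt_root[OF xP] p(2) by metis
      have nb: "\<forall>u\<in>C. lt le ?v u \<longrightarrow> \<not> lt le u x"
        using p(3) p(1) CP lt_asym by (meson lt_le_trans subsetD)
      have "ls ?v = x" using ls_Mc(1)[OF p(1) vr x p(2) nb] .
      moreover have "\<not> maximal P le ?v" using vr maximal_iff by blast
      ultimately show ?thesis using pchain.step[OF vpc] by simp
    qed
  qed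
qed

lemma pc_eq: "pc = C"
  using pc_sub C_sub_aux by blast

lemma Mc_F: "Mc \<in> F"
proof -
  have "promote P le Mc x = L x" if x: "x \<in> P" for x
  proof (cases "x \<in> C")
    case False thus ?thesis using x pc_eq by (simp add: promote_def Mc_def)
  next
    case xC: True
    show ?thesis
    proof (cases "x = root")
      case True thus ?thesis using xC pc_eq maximal_iff L_root by (simp add: promote_def)
    next
      case False
      obtain w where w: "w \<in> C" "lt le x w" "\<forall>u\<in>C. lt le x u \<longrightarrow> \<not> lt le u w" using nx_ex[OF xC False] by blast
      have "ls x = w" "Mc w = L x + 1" using ls_Mc[OF xC False w] by blast+
      thus ?thesis using xC pc_eq maximal_iff False by (simp add: promote_def)
    qed
  qed
  thus ?thesis using Mc_lab by (simp add: F_def)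
qed

end

context mt begin

lemma card_F_Ch: "card F = card Ch"
proof -
  have inj: "inj_on (pchain P le) F" using F_inj by (auto simp: inj_on_def)
  have "pchain P le ` F = Ch"
  proof (intro equalityI subsetI)
    fix C assume "C \<in> pchain P le ` F"
    then obtain M where M: "M \<in> F" "C = pchain P le M" by blast
    interpret A: pre P le L M using F_pre[OF M(1)] .
    show "C \<in> Ch" using A.pc_Ch M by simp
  next
    fix C assume C: "C \<in> Ch"
    interpret B: cons P le L C using C unfolding Ch_def cons_def cons_axioms_def
      using mt_axioms by blast
    show "C \<in> pchain P le ` F" using B.Mc_F B.pc_eq by (metis imageI)
  qed
  thus ?thesis using card_image[OF inj] by simp
qed

end


context mt begin

lemma golden_root: "golden P le L root"
  using root not_lt_root by (simp add: golden_def)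

lemma card_Ch_X: "card Ch = card {S. S \<subseteq> {x\<in>P. golden P le L x} - {root} \<and> chain S}"
proof -
  let ?X = "{x\<in>P. golden P le L x} - {root}"
  let ?S = "{S. S \<subseteq> ?X \<and> chain S}"
  have "Ch = insert root ` ?S"
  proof (intro equalityI subsetI)
    fix C assume C: "C \<in> Ch"
    hence "C - {root} \<in> ?S" unfolding Ch_def chain_def by auto
    moreover have "C = insert root (C - {root})" using C unfolding Ch_def by blast
    ultimately show "C \<in> insert root ` ?S" by blast
  next
    fix C assume "C \<in> insert root ` ?S"
    then obtain S where S: "S \<in> ?S" "C = insert root S" by blast
    have "chain C" using S root unfolding chain_def by auto
    thus "C \<in> Ch" using S root golden_root unfolding Ch_def by auto
  qed
  moreover have "inj_on (insert root) ?S"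
  proof (rule inj_onI)
    fix A B assume AB: "A \<in> ?S" "B \<in> ?S" "insert root A = insert root B"
    have "root \<notin> A" "root \<notin> B" using AB(1,2) by blast+
    thus "A = B" using AB(3) by (metis Diff_insert_absorb)
  qed
  ultimately show ?thesis using card_image by metis
qed

lemma count:
  defines "b \<equiv> hbv P le"
  defines "U \<equiv> {x\<in>P. golden P le L x \<and> le b x}"
  defines "G \<equiv> {x\<in>P. golden P le L x \<and> lt le x b}"
  shows "card Ch = (2::nat) ^ (card U - 1) + (\<Sum>x\<in>G. (2::nat) ^ (card {y\<in>G. le x y} + card U - 2))"
proof -
  have bP: "b \<in> P" and bc: "\<forall>x\<in>P. le b x \<or> lt le x b" using hbv_props b_def by auto
  let ?X = "{x\<in>P. golden P le L x} - {root}"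
  let ?U = "U - {root}"
  have rU: "root \<in> U" using golden_root root bP unfolding U_def by blast
  have fU: "finite U" using fin unfolding U_def by simp
  have k1: "card U \<ge> 1" using rU fU by (metis One_nat_def Suc_leI card_gt_0_iff empty_iff)
  have cU: "card ?U = card U - 1" using rU fU by simp
  have GP: "G \<subseteq> P" and UP: "?U \<subseteq> P" unfolding G_def U_def by auto
  have XGU: "?X = G \<union> ?U" using bc not_lt_root[OF bP] unfolding G_def U_def by auto
  have disj: "G \<inter> ?U = {}"
  proof -
    have False if x: "x \<in> G" "x \<in> U" for x
    proof -
      have "x \<in> P" "le x b" "x \<noteq> b" "le b x" using x unfolding G_def U_def lt_def by auto
      thus False using antisym bP by blast
    qed
    thus ?thesis by blast
  qed
  have fG: "finite G" using fin GP finite_subset by blast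
  have fU': "finite ?U" using fU by simp
  have XP: "?X \<subseteq> P" by blast
  have sG: "(2::nat) ^ card {y\<in>?X. lt le x y} = (2::nat) ^ (card {y\<in>G. le x y} + card U - 2)" if x: "x \<in> G" for x
  proof -
    have xP: "x \<in> P" "lt le x b" using x unfolding G_def by auto
    have e1: "{y\<in>?X. lt le x y} = {y\<in>G. lt le x y} \<union> ?U"
    proof (intro equalityI subsetI)
      fix y assume "y \<in> {y\<in>?X. lt le x y}"
      thus "y \<in> {y\<in>G. lt le x y} \<union> ?U" using XGU by auto
    next
      fix y assume y: "y \<in> {y\<in>G. lt le x y} \<union> ?U"
      show "y \<in> {y\<in>?X. lt le x y}"
      proof (cases "y \<in> ?U")
        case True
        hence "y \<in> P" "le b y" unfolding U_def by auto
        hence "lt le x y" using lt_le_trans[OF xP(1) bP _ xP(2)] by blast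
        thus ?thesis using True XGU by blast
      next
        case False thus ?thesis using y XGU by blast
      qed
    qed
    have d1: "{y\<in>G. lt le x y} \<inter> ?U = {}" using disj by blast
    have c1: "card {y\<in>?X. lt le x y} = card {y\<in>G. lt le x y} + (card U - 1)"
      using e1 d1 card_Un_disjoint[of "{y\<in>G. lt le x y}" ?U] fG fU' cU by simp
    have e2: "{y\<in>G. le x y} = insert x {y\<in>G. lt le x y}" using x refl xP by (auto simp: lt_def)
    have c2: "card {y\<in>G. le x y} = card {y\<in>G. lt le x y} + 1" using e2 fG by (simp add: lt_def)
    show ?thesis using c1 c2 k1 by simp
  qed
  have sU: "(2::nat) ^ card {y\<in>?X. lt le x y} = (2::nat) ^ card {y\<in>?U. lt le x y}" if x: "x \<in> ?U" for x
  proof -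
    have xP: "x \<in> P" "le b x" using x unfolding U_def by auto
    have "{y\<in>?X. lt le x y} = {y\<in>?U. lt le x y}"
    proof (intro equalityI subsetI)
      fix y assume y: "y \<in> {y\<in>?X. lt le x y}"
      show "y \<in> {y\<in>?U. lt le x y}"
      proof (cases "y \<in> G")
        case True
        hence "y \<in> P" "lt le y b" unfolding G_def by auto
        hence "lt le y x" using lt_le_trans[OF _ bP xP(1) _ xP(2)] by blast
        thus ?thesis using y lt_asym xP \<open>y \<in> P\<close> by blast
      next
        case False thus ?thesis using y XGU by blast
      qed
    qed (use XGU in auto)
    thus ?thesis by simp
  qed
  have Uch: "chain ?U"
    unfolding chain_def
  proof (intro ballI)
    fix x y assume "x \<in> ?U" "y \<in> ?U"
    hence "x \<in> P" "y \<in> P" "le b x" "le b y" unfolding U_def by auto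
    thus "le x y \<or> le y x" using tp bP by blast
  qed
  have sumU: "(\<Sum>x\<in>?U. (2::nat) ^ card {y\<in>?U. lt le x y}) = (2::nat) ^ (card U - 1) - 1"
    using chains_card[OF UP] chain_pow_card[OF UP Uch] cU by simp
  have "card Ch = 1 + (\<Sum>x\<in>?X. (2::nat) ^ card {y\<in>?X. lt le x y})"
    using card_Ch_X chains_card[OF XP] by simp
  also have "(\<Sum>x\<in>?X. (2::nat) ^ card {y\<in>?X. lt le x y}) =
      (\<Sum>x\<in>G. (2::nat) ^ card {y\<in>?X. lt le x y}) + (\<Sum>x\<in>?U. (2::nat) ^ card {y\<in>?X. lt le x y})"
    unfolding XGU by (rule sum.union_disjoint[OF fG fU' disj])
  also have "(\<Sum>x\<in>G. (2::nat) ^ card {y\<in>?X. lt le x y}) = (\<Sum>x\<in>G. (2::nat) ^ (card {y\<in>G. le x y} + card U - 2))"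
    using sG by (rule sum.cong[OF HOL.refl])
  also have "(\<Sum>x\<in>?U. (2::nat) ^ card {y\<in>?X. lt le x y}) = (\<Sum>x\<in>?U. (2::nat) ^ card {y\<in>?U. lt le x y})"
    using sU by (rule sum.cong[OF HOL.refl])
  also note sumU
  finally show ?thesis
    by (simp add: add.commute)
qed

end

theorem mainTheorem3:
  fixes P :: "'a set" and le :: "'a \<Rightarrow> 'a \<Rightarrow> bool" and L :: "'a \<Rightarrow> nat"
  assumes "rooted_tree P le"
    and "bij_betw L P {1..card P}"
    and "\<forall>x\<in>P. L x = card P \<longrightarrow> maximal P le x"
  shows "card {L' \<in> labelings P. \<forall>x\<in>P. promote P le L' x = L x}
       = 2 ^ (card {x\<in>P. golden P le L x \<and> le (hbv P le) x} - 1)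
         + (\<Sum>T\<in>goldenM P le L. \<Sum>x\<in>T.
              2 ^ (omega T le x + card {x\<in>P. golden P le L x \<and> le (hbv P le) x} - 2))"
proof -
  interpret mt P le L using assms by (simp add: mt_def mt_axioms_def rtree_def)
  let ?k = "card {x\<in>P. golden P le L x \<and> le (hbv P le) x}"
  let ?G = "{x\<in>P. golden P le L x \<and> lt le x (hbv P le)}"
  have gM: "goldenM P le L = Mx ?G" unfolding goldenM_def Mx_def Let_def by simp
  have e3: "(\<Sum>T\<in>goldenM P le L. \<Sum>x\<in>T. (2::nat) ^ (omega T le x + ?k - 2)) =
        (\<Sum>x\<in>?G. (2::nat) ^ (card {y\<in>?G. le x y} + ?k - 2))"
    unfolding gM by (rule M_sum[of ?G "\<lambda>w. (2::nat) ^ (w + ?k - 2)"]) blast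
  have e1: "card {L' \<in> labelings P. \<forall>x\<in>P. promote P le L' x = L x} = card Ch"
    using card_F_Ch by (simp add: F_def)
  have e2: "card Ch = 2 ^ (?k - 1) + (\<Sum>x\<in>?G. 2 ^ (card {y\<in>?G. le x y} + ?k - 2))"
    by (rule count)
  show ?thesis by (simp only: e1 e2 e3)
qed


end
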